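(* Let $Y=(y^{(1)},\dots,y^{(n)})$ be uniformly distributed on $\{-1,+1\}^n$, let $\eta^{(1)},\dots,\eta^{(n)}$ be i.i.d. $\mathcal{N}(0,\sigma_\eta^2)$ independent of $Y$, and release $Y_\eta=(y^{(1)}+\eta^{(1)},\dots,y^{(n)}+\eta^{(n)})$ (together with fixed, non-random design vectors $x^{(i)}$). If $\gamma\in(0,1)$ satisfies $\gamma\le1-\frac{2}{n}$ and $$\sigma_\eta^2\ge\frac{8}{(1-\gamma)\log2},$$ then $$\inf_{\mathcal{A}}\mathbb{P}_{Y,\eta}\big[\mathcal{A}(Y_\eta)\neq Y\big]\ge\gamma,$$ where the infimum is over all maps $\mathcal{A}:\mathbb{R}^n\to\{-1,+1\}^n$.
   Context: This is the perturbation of the responses in generalized linear models (and nonparametric generalized regression) with fixed design and sufficient statistic $t(y)=y$. Logarithms are natural. *)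

theory Defs
  imports "HOL-Probability.Probability"
begin

text \<open>Vectors in R^n / {-1,+1}^n are extensional functions nat => real on {..<n}.\<close>

definition label_space :: "nat \<Rightarrow> (nat \<Rightarrow> real) set" where
  "label_space n = PiE {..<n} (\<lambda>_. {-1, 1})"

definition Y_dist :: "nat \<Rightarrow> (nat \<Rightarrow> real) measure" where
  "Y_dist n = measure_pmf (pmf_of_set (label_space n))"

text \<open>eta^(1..n) i.i.d. N(0, sigma^2) (sigma is the standard deviation).\<close>
definition noise_dist :: "nat \<Rightarrow> real \<Rightarrow> (nat \<Rightarrow> real) measure" where
  "noise_dist n \<sigma> = PiM {..<n} (\<lambda>_. density lborel (normal_density 0 \<sigma>))"

definition joint_dist :: "nat \<Rightarrow> real \<Rightarrow> ((nat \<Rightarrow> real) \<times> (nat \<Rightarrow> real)) measure" where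
  "joint_dist n \<sigma> = Y_dist n \<Otimes>\<^sub>M noise_dist n \<sigma>"

definition perturb :: "nat \<Rightarrow> (nat \<Rightarrow> real) \<Rightarrow> (nat \<Rightarrow> real) \<Rightarrow> (nat \<Rightarrow> real)" where
  "perturb n y e = (\<lambda>i\<in>{..<n}. y i + e i)"

definition error_prob :: "nat \<Rightarrow> real \<Rightarrow> ((nat \<Rightarrow> real) \<Rightarrow> (nat \<Rightarrow> real)) \<Rightarrow> real" where
  "error_prob n \<sigma> A = measure (joint_dist n \<sigma>)
     {ye \<in> space (joint_dist n \<sigma>). A (perturb n (fst ye) (snd ye)) \<noteq> fst ye}"

end

theory Submission
  imports Defs
begin


lemma PiM_normal_density:
  assumes fin: "finite I" and sp: "0 < \<sigma>"
  shows "PiM I (\<lambda>i. density lborel (normal_density (\<mu> i) \<sigma>)) =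
    density (PiM I (\<lambda>_. lborel)) (\<lambda>x. \<Prod>i\<in>I. ennreal (normal_density (\<mu> i) \<sigma> (x i)))"
proof -
  interpret P: product_prob_space "\<lambda>i. density lborel (normal_density (\<mu> i) \<sigma>)"
    using sp by (intro product_prob_spaceI prob_space_normal_density)
  interpret L: product_sigma_finite "\<lambda>_. lborel :: real measure"
    by (intro product_sigma_finite.intro) (simp add: sigma_finite_lborel)
  show ?thesis
  proof (rule P.PiM_eqI[symmetric, OF fin])
    show "sets (density (PiM I (\<lambda>_. lborel)) (\<lambda>x. \<Prod>i\<in>I. ennreal (normal_density (\<mu> i) \<sigma> (x i)))) = sets (PiM I (\<lambda>i. density lborel (normal_density (\<mu> i) \<sigma>)))"
      unfolding sets_density by (intro sets_PiM_cong) auto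
  next
    fix A assume A: "\<And>i. i \<in> I \<Longrightarrow> A i \<in> sets (density lborel (normal_density (\<mu> i) \<sigma>))"
    then have A': "\<And>i. i \<in> I \<Longrightarrow> A i \<in> sets borel" by simp
    have box: "Pi\<^sub>E I A \<in> sets (PiM I (\<lambda>_. lborel))"
      using A' by (intro sets_PiM_I_finite fin) auto
    have "emeasure (density (PiM I (\<lambda>_. lborel)) (\<lambda>x. \<Prod>i\<in>I. ennreal (normal_density (\<mu> i) \<sigma> (x i)))) (Pi\<^sub>E I A)
       = (\<integral>\<^sup>+x. (\<Prod>i\<in>I. ennreal (normal_density (\<mu> i) \<sigma> (x i))) * indicator (Pi\<^sub>E I A) x \<partial>PiM I (\<lambda>_. lborel))"
      using box by (subst emeasure_density) auto
    also have "\<dots> = (\<integral>\<^sup>+x. (\<Prod>i\<in>I. ennreal (normal_density (\<mu> i) \<sigma> (x i)) * indicator (A i) (x i)) \<partial>PiM I (\<lambda>_. lborel))"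
    proof (rule nn_integral_cong)
      fix x assume "x \<in> space (PiM I (\<lambda>_. lborel :: real measure))"
      then have x: "x \<in> extensional I" by (simp add: space_PiM PiE_def)
      have "indicator (Pi\<^sub>E I A) x = (\<Prod>i\<in>I. indicator (A i) (x i) :: ennreal)"
        using x fin by (auto simp: indicator_def PiE_def Pi_def)
      then show "(\<Prod>i\<in>I. ennreal (normal_density (\<mu> i) \<sigma> (x i))) * indicator (Pi\<^sub>E I A) x = (\<Prod>i\<in>I. ennreal (normal_density (\<mu> i) \<sigma> (x i)) * indicator (A i) (x i))"
        by (simp add: prod.distrib)
    qed
    also have "\<dots> = (\<Prod>i\<in>I. \<integral>\<^sup>+t. ennreal (normal_density (\<mu> i) \<sigma> t) * indicator (A i) t \<partial>lborel)"
      using A' by (intro L.product_nn_integral_prod fin) auto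
    also have "\<dots> = (\<Prod>i\<in>I. emeasure (density lborel (normal_density (\<mu> i) \<sigma>)) (A i))"
      using A' by (intro prod.cong refl) (simp add: emeasure_density)
    finally show "emeasure (density (PiM I (\<lambda>_. lborel)) (\<lambda>x. \<Prod>i\<in>I. ennreal (normal_density (\<mu> i) \<sigma> (x i)))) (Pi\<^sub>E I A) = (\<Prod>i\<in>I. emeasure (density lborel (normal_density (\<mu> i) \<sigma>)) (A i))" .
  qed
qed

lemma noise_sets: "sets (noise_dist n \<sigma>) = sets (PiM {..<n} (\<lambda>_. lborel))"
  unfolding noise_dist_def by (intro sets_PiM_cong) auto

lemma space_noise: "space (noise_dist n \<sigma>) = PiE {..<n} (\<lambda>_. UNIV)"
  unfolding noise_dist_def by (simp add: space_PiM)

lemma perturb_meas: "perturb n y \<in> measurable (noise_dist n \<sigma>) (PiM {..<n} (\<lambda>_. lborel))"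
  unfolding measurable_cong_sets[OF noise_sets refl] perturb_def by measurable

lemma noise_shift:
  assumes sp: "0 < \<sigma>"
  shows "distr (noise_dist n \<sigma>) (PiM {..<n} (\<lambda>_. lborel)) (perturb n y)
     = PiM {..<n} (\<lambda>i. density lborel (normal_density (y i) \<sigma>))"
proof -
  interpret P: product_prob_space "\<lambda>i. density lborel (normal_density (y i) \<sigma>)"
    using sp by (intro product_prob_spaceI prob_space_normal_density)
  interpret Q: product_prob_space "\<lambda>i. density lborel (normal_density 0 \<sigma>)"
    using sp by (intro product_prob_spaceI prob_space_normal_density)
  show ?thesis
  proof (rule P.PiM_eqI)
    show "sets (distr (noise_dist n \<sigma>) (PiM {..<n} (\<lambda>_. lborel)) (perturb n y)) = sets (PiM {..<n} (\<lambda>i. density lborel (normal_density (y i) \<sigma>)))"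
      unfolding sets_distr by (intro sets_PiM_cong) auto
  next
    fix A assume A: "\<And>i. i \<in> {..<n} \<Longrightarrow> A i \<in> sets (density lborel (normal_density (y i) \<sigma>))"
    then have A': "\<And>i. i \<in> {..<n} \<Longrightarrow> A i \<in> sets borel" by simp
    have box: "Pi\<^sub>E {..<n} A \<in> sets (PiM {..<n} (\<lambda>_. lborel))"
      using A' by (intro sets_PiM_I_finite) auto
    have pre: "perturb n y -` Pi\<^sub>E {..<n} A \<inter> space (noise_dist n \<sigma>) = Pi\<^sub>E {..<n} (\<lambda>i. (\<lambda>t. y i + t) -` A i)"
      by (auto simp: space_noise perturb_def PiE_def Pi_def extensional_def)
    have "emeasure (distr (noise_dist n \<sigma>) (PiM {..<n} (\<lambda>_. lborel)) (perturb n y)) (Pi\<^sub>E {..<n} A)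
       = emeasure (noise_dist n \<sigma>) (Pi\<^sub>E {..<n} (\<lambda>i. (\<lambda>t. y i + t) -` A i))"
      using box perturb_meas pre by (subst emeasure_distr) auto
    also have "\<dots> = (\<Prod>i\<in>{..<n}. emeasure (density lborel (normal_density 0 \<sigma>)) ((\<lambda>t. y i + t) -` A i))"
      unfolding noise_dist_def using A' by (intro Q.emeasure_PiM) (auto intro!: measurable_sets[of _ borel borel, simplified])
    also have "\<dots> = (\<Prod>i\<in>{..<n}. emeasure (density lborel (normal_density (y i) \<sigma>)) (A i))"
    proof (rule prod.cong[OF refl])
      fix i assume i: "i \<in> {..<n}"
      have mA: "A i \<in> sets borel" using A' i by auto
      have "emeasure (density lborel (normal_density (y i) \<sigma>)) (A i)
          = (\<integral>\<^sup>+t. ennreal (normal_density (y i) \<sigma> t) * indicator (A i) t \<partial>lborel)"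
        using mA by (simp add: emeasure_density)
      also have "\<dots> = (\<integral>\<^sup>+t. ennreal (normal_density (y i) \<sigma> (y i + 1 * t)) * indicator (A i) (y i + 1 * t) \<partial>lborel)"
        using mA by (subst nn_integral_real_affine[where c=1 and t="y i"]) auto
      also have "\<dots> = (\<integral>\<^sup>+t. ennreal (normal_density 0 \<sigma> t) * indicator ((\<lambda>t. y i + t) -` A i) t \<partial>lborel)"
        by (simp add: normal_density_def indicator_def)
      also have "\<dots> = emeasure (density lborel (normal_density 0 \<sigma>)) ((\<lambda>t. y i + t) -` A i)"
        using mA by (subst emeasure_density) (auto intro!: measurable_sets[of _ borel borel, simplified])
      finally show "emeasure (density lborel (normal_density 0 \<sigma>)) ((\<lambda>t. y i + t) -` A i) = emeasure (density lborel (normal_density (y i) \<sigma>)) (A i)" by simp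
    qed
    finally show "emeasure (distr (noise_dist n \<sigma>) (PiM {..<n} (\<lambda>_. lborel)) (perturb n y)) (Pi\<^sub>E {..<n} A) = (\<Prod>i\<in>{..<n}. emeasure (density lborel (normal_density (y i) \<sigma>)) (A i))" .
  qed simp
qed

definition hfun :: "real \<Rightarrow> real \<Rightarrow> real" where
  "hfun \<sigma> t = (if 0 \<le> t then normal_density 1 \<sigma> t else normal_density (-1) \<sigma> t)"

lemma nd_mono:
  assumes "(t - z)\<^sup>2 \<le> (t - y)\<^sup>2" shows "normal_density y \<sigma> t \<le> normal_density z \<sigma> t"
proof -
  have "(t - z)\<^sup>2 / (2 * \<sigma>\<^sup>2) \<le> (t - y)\<^sup>2 / (2 * \<sigma>\<^sup>2)"
    using assms by (intro divide_right_mono) auto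
  then have "exp (- (t - y)\<^sup>2 / (2 * \<sigma>\<^sup>2)) \<le> exp (- (t - z)\<^sup>2 / (2 * \<sigma>\<^sup>2))" by simp
  then show ?thesis unfolding normal_density_def
    by (intro mult_left_mono) auto
qed

lemma hfun_ge:
  assumes "y \<in> {-1, 1}" shows "normal_density y \<sigma> t \<le> hfun \<sigma> t"
proof -
  have a: "(t - 1)\<^sup>2 \<le> (t - y)\<^sup>2" if "0 \<le> t" using assms that by (auto simp: power2_eq_square algebra_simps)
  have b: "(t - (-1))\<^sup>2 \<le> (t - y)\<^sup>2" if "\<not> 0 \<le> t" using assms that by (auto simp: power2_eq_square algebra_simps)
  show ?thesis unfolding hfun_def
    using nd_mono[OF a] nd_mono[OF b] by auto
qed

lemma normal_density_le: "0 < \<sigma> \<Longrightarrow> normal_density 0 \<sigma> t \<le> 1 / (sqrt (2 * pi) * \<sigma>)"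
proof -
  assume sp: "0 < \<sigma>"
  have "exp (- (t\<^sup>2 / (2 * \<sigma>\<^sup>2))) \<le> 1" by simp
  then show ?thesis unfolding normal_density_def using sp
    by (simp add: real_sqrt_mult divide_right_mono)
qed

lemma hfun_int:
  assumes sp: "0 < \<sigma>"
  shows "(\<integral>\<^sup>+t. ennreal (hfun \<sigma> t) \<partial>lborel) \<le> ennreal (1 + 2 / (sqrt (2 * pi) * \<sigma>))"
proof -
  define c where "c = 1 / (sqrt (2 * pi) * \<sigma>)"
  have c0: "0 \<le> c" using sp by (simp add: c_def)
  have "(\<integral>\<^sup>+t. ennreal (hfun \<sigma> t) \<partial>lborel) = (\<integral>\<^sup>+t. ennreal (normal_density 1 \<sigma> t) * indicator {0..} t + ennreal (normal_density (-1) \<sigma> t) * indicator {..<0} t \<partial>lborel)"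
    by (intro nn_integral_cong) (auto simp: hfun_def indicator_def)
  also have "\<dots> = (\<integral>\<^sup>+t. ennreal (normal_density 1 \<sigma> t) * indicator {0..} t \<partial>lborel) + (\<integral>\<^sup>+t. ennreal (normal_density (-1) \<sigma> t) * indicator {..<0} t \<partial>lborel)"
    by (intro nn_integral_add) auto
  also have "(\<integral>\<^sup>+t. ennreal (normal_density 1 \<sigma> t) * indicator {0..} t \<partial>lborel) = (\<integral>\<^sup>+t. ennreal (normal_density 1 \<sigma> (1 + 1 * t)) * indicator {0..} (1 + 1 * t) \<partial>lborel)"
    by (subst nn_integral_real_affine[where c=1 and t=1]) auto
  also have "\<dots> = (\<integral>\<^sup>+t. ennreal (normal_density 0 \<sigma> t) * indicator {-1..} t \<partial>lborel)"
    by (intro nn_integral_cong) (auto simp: normal_density_def indicator_def)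
  also have "(\<integral>\<^sup>+t. ennreal (normal_density (-1) \<sigma> t) * indicator {..<0} t \<partial>lborel) = (\<integral>\<^sup>+t. ennreal (normal_density (-1) \<sigma> (-1 + 1 * t)) * indicator {..<0} (-1 + 1 * t) \<partial>lborel)"
    by (subst nn_integral_real_affine[where c=1 and t="-1"]) auto
  also have "\<dots> = (\<integral>\<^sup>+t. ennreal (normal_density 0 \<sigma> t) * indicator {..<1} t \<partial>lborel)"
    by (intro nn_integral_cong) (auto simp: normal_density_def indicator_def)
  also have "(\<integral>\<^sup>+t. ennreal (normal_density 0 \<sigma> t) * indicator {-1..} t \<partial>lborel) + (\<integral>\<^sup>+t. ennreal (normal_density 0 \<sigma> t) * indicator {..<1} t \<partial>lborel)
     = (\<integral>\<^sup>+t. ennreal (normal_density 0 \<sigma> t) * indicator {-1..} t + ennreal (normal_density 0 \<sigma> t) * indicator {..<1} t \<partial>lborel)"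
    by (intro nn_integral_add[symmetric]) auto
  also have "\<dots> = (\<integral>\<^sup>+t. ennreal (normal_density 0 \<sigma> t) + ennreal (normal_density 0 \<sigma> t) * indicator {-1..<1} t \<partial>lborel)"
    by (intro nn_integral_cong) (auto simp: indicator_def)
  also have "\<dots> = (\<integral>\<^sup>+t. ennreal (normal_density 0 \<sigma> t) \<partial>lborel) + (\<integral>\<^sup>+t. ennreal (normal_density 0 \<sigma> t) * indicator {-1..<1} t \<partial>lborel)"
    by (intro nn_integral_add) auto
  also have "(\<integral>\<^sup>+t. ennreal (normal_density 0 \<sigma> t) \<partial>lborel) = 1"
    using sp by (subst nn_integral_eq_integral) auto
  also have "(\<integral>\<^sup>+t. ennreal (normal_density 0 \<sigma> t) * indicator {-1..<1} t \<partial>lborel) \<le> (\<integral>\<^sup>+t. ennreal c * indicator {-1..<1} (t::real) \<partial>lborel)"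
    by (rule nn_integral_mono) (use normal_density_le[OF sp] in \<open>auto simp: c_def split: split_indicator intro!: ennreal_leI\<close>)
  also have "\<dots> = ennreal c * emeasure lborel {-1..<(1::real)}"
    by (rule nn_integral_cmult_indicator) simp
  also have "emeasure lborel {-1..<(1::real)} = 2"
    by simp
  finally have "(\<integral>\<^sup>+t. ennreal (hfun \<sigma> t) \<partial>lborel) \<le> 1 + ennreal c * 2" by (simp add: add_left_mono)
  also have "\<dots> = ennreal (1 + c * 2)"
    using c0 by (subst ennreal_plus) (auto simp: ennreal_mult)
  also have "1 + c * 2 = 1 + 2 / (sqrt (2 * pi) * \<sigma>)"
    by (simp add: c_def)
  finally show ?thesis .
qed



lemma L_finite: "finite (label_space n)"
  unfolding label_space_def by (intro finite_PiE) auto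

lemma L_card: "card (label_space n) = 2 ^ n"
  unfolding label_space_def by (subst card_PiE) (auto simp: numeral_2_eq_2)

lemma L_ne: "label_space n \<noteq> {}"
  unfolding label_space_def by (simp add: PiE_eq_empty_iff)

lemma space_PC: "space (PiM {..<n} (\<lambda>_. count_space {-1, 1::real})) = label_space n"
  unfolding label_space_def by (simp add: space_PiM)

lemma single_sets:
  assumes "y \<in> label_space n"
  shows "{y} \<in> sets (PiM {..<n} (\<lambda>_. count_space {-1, 1::real}))"
proof -
  have "{y} = PiE {..<n} (\<lambda>i. {y i})"
    using assms by (intro PiE_singleton[symmetric]) (auto simp: label_space_def PiE_def)
  also have "\<dots> \<in> sets (PiM {..<n} (\<lambda>_. count_space {-1, 1::real}))"
    using assms by (intro sets_PiM_I_finite) (auto simp: label_space_def PiE_def Pi_def)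
  finally show ?thesis .
qed

lemma success_bound:
  assumes sp: "0 < \<sigma>"
    and A: "A \<in> measurable (PiM {..<n} (\<lambda>_. lborel)) (PiM {..<n} (\<lambda>_. count_space {-1, 1::real}))"
  shows "(\<Sum>y\<in>label_space n. emeasure (noise_dist n \<sigma>) {e \<in> space (noise_dist n \<sigma>). A (perturb n y e) = y})
     \<le> ennreal (1 + 2 / (sqrt (2 * pi) * \<sigma>)) ^ n"
proof -
  let ?PL = "PiM {..<n} (\<lambda>_. lborel :: real measure)"
  define B where "B y = A -` {y} \<inter> space ?PL" for y
  define g where "g y z = (\<Prod>i\<in>{..<n}. ennreal (normal_density (y i) \<sigma> (z i)))" for y z
  interpret L: product_sigma_finite "\<lambda>_. lborel :: real measure"
    by (intro product_sigma_finite.intro) (simp add: sigma_finite_lborel)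
  have Bm: "B y \<in> sets ?PL" if "y \<in> label_space n" for y
    unfolding B_def using A single_sets[OF that] by (rule measurable_sets)
  have gm: "g y \<in> borel_measurable ?PL" for y
    unfolding g_def by measurable
  have step1: "emeasure (noise_dist n \<sigma>) {e \<in> space (noise_dist n \<sigma>). A (perturb n y e) = y}
      = (\<integral>\<^sup>+z. g y z * indicator (B y) z \<partial>?PL)" if y: "y \<in> label_space n" for y
  proof -
    have pre: "perturb n y -` B y \<inter> space (noise_dist n \<sigma>) = {e \<in> space (noise_dist n \<sigma>). A (perturb n y e) = y}"
      using measurable_space[OF perturb_meas[of n y \<sigma>]] by (auto simp: B_def)
    have "emeasure (noise_dist n \<sigma>) {e \<in> space (noise_dist n \<sigma>). A (perturb n y e) = y}
        = emeasure (distr (noise_dist n \<sigma>) ?PL (perturb n y)) (B y)"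
      using Bm[OF y] perturb_meas pre by (subst emeasure_distr) auto
    also have "\<dots> = emeasure (density ?PL (g y)) (B y)"
      unfolding noise_shift[OF sp] PiM_normal_density[OF finite_lessThan sp] g_def ..
    also have "\<dots> = (\<integral>\<^sup>+z. g y z * indicator (B y) z \<partial>?PL)"
      using Bm[OF y] gm by (simp add: emeasure_density)
    finally show ?thesis .
  qed
  have "(\<Sum>y\<in>label_space n. emeasure (noise_dist n \<sigma>) {e \<in> space (noise_dist n \<sigma>). A (perturb n y e) = y})
      = (\<Sum>y\<in>label_space n. \<integral>\<^sup>+z. g y z * indicator (B y) z \<partial>?PL)"
    using step1 by (rule sum.cong[OF refl])
  also have "\<dots> = (\<integral>\<^sup>+z. (\<Sum>y\<in>label_space n. g y z * indicator (B y) z) \<partial>?PL)"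
    using Bm gm by (intro nn_integral_sum[symmetric]) auto
  also have "\<dots> \<le> (\<integral>\<^sup>+z. (\<Prod>i\<in>{..<n}. ennreal (hfun \<sigma> (z i))) \<partial>?PL)"
  proof (rule nn_integral_mono)
    fix z assume z: "z \<in> space ?PL"
    have Az: "A z \<in> label_space n"
      using measurable_space[OF A z] space_PC by simp
    have "(\<Sum>y\<in>label_space n. g y z * indicator (B y) z) = (\<Sum>y\<in>label_space n. if y = A z then g y z else 0)"
      using z by (intro sum.cong) (auto simp: B_def)
    also have "\<dots> = g (A z) z"
      using Az L_finite by simp
    also have "\<dots> = ennreal (\<Prod>i\<in>{..<n}. normal_density (A z i) \<sigma> (z i))"
      unfolding g_def by (rule prod_ennreal) simp
    also have "\<dots> \<le> ennreal (\<Prod>i\<in>{..<n}. hfun \<sigma> (z i))"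
      using Az by (intro ennreal_leI prod_mono conjI hfun_ge) (auto simp: label_space_def)
    also have "\<dots> = (\<Prod>i\<in>{..<n}. ennreal (hfun \<sigma> (z i)))"
      by (rule prod_ennreal[symmetric]) (auto intro: order_trans[OF normal_density_nonneg hfun_ge])
    finally show "(\<Sum>y\<in>label_space n. g y z * indicator (B y) z) \<le> (\<Prod>i\<in>{..<n}. ennreal (hfun \<sigma> (z i)))" .
  qed
  also have "\<dots> = (\<Prod>i\<in>{..<n}. \<integral>\<^sup>+t. ennreal (hfun \<sigma> t) \<partial>lborel)"
    by (rule L.product_nn_integral_prod) (auto simp: hfun_def)
  also have "\<dots> = (\<integral>\<^sup>+t. ennreal (hfun \<sigma> t) \<partial>lborel) ^ n"
    by simp
  also have "\<dots> \<le> ennreal (1 + 2 / (sqrt (2 * pi) * \<sigma>)) ^ n"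
    by (intro power_mono hfun_int sp) simp
  finally show ?thesis .
qed

lemma pow43: "real n \<le> 2 * (4/3) ^ n"
proof (induction n)
  case 0 then show ?case by simp
next
  case (Suc n)
  show ?case
  proof (cases "n < 3")
    case True
    then have "n = 0 \<or> n = 1 \<or> n = 2" by auto
    then show ?thesis by (auto simp: power2_eq_square)
  next
    case False
    then have "real (Suc n) \<le> 4/3 * real n" by simp
    also have "\<dots> \<le> 4/3 * (2 * (4/3) ^ n)" using Suc.IH by simp
    also have "\<dots> = 2 * (4/3) ^ Suc n" by simp
    finally show ?thesis .
  qed
qed

lemma pow34: "real n * (3/4) ^ n \<le> 2"
proof -
  have "real n * (3/4) ^ n \<le> 2 * (4/3) ^ n * (3/4) ^ n"
    using pow43[of n] by (intro mult_right_mono) auto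
  also have "\<dots> = 2" by (simp add: power_mult_distrib[symmetric])
  finally show ?thesis .
qed

theorem theorem6:
  fixes n :: nat and \<gamma> \<sigma> :: real
  assumes "0 < n"
    and "0 < \<gamma>" and "\<gamma> < 1" and "\<gamma> \<le> 1 - 2 / real n"
    and "0 < \<sigma>" and "\<sigma>\<^sup>2 \<ge> 8 / ((1 - \<gamma>) * ln 2)"
  shows "\<gamma> \<le> (INF A \<in> measurable (PiM {..<n} (\<lambda>_. lborel)) (PiM {..<n} (\<lambda>_. count_space {-1, 1})).
                 error_prob n \<sigma> A)"
proof (rule cINF_greatest)
  let ?PL = "PiM {..<n} (\<lambda>_. lborel :: real measure)"
  let ?PC = "PiM {..<n} (\<lambda>_. count_space {-1, 1::real})"
  have "(\<lambda>_. \<lambda>i\<in>{..<n}. 1) \<in> measurable ?PL ?PC"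
    by (rule measurable_const) (auto simp: space_PiM)
  then show "measurable ?PL ?PC \<noteq> {}" by blast
next
  let ?PL = "PiM {..<n} (\<lambda>_. lborel :: real measure)"
  let ?PC = "PiM {..<n} (\<lambda>_. count_space {-1, 1::real})"
  let ?N = "noise_dist n \<sigma>"
  let ?J = "joint_dist n \<sigma>"
  let ?L = "label_space n"
  fix A assume A: "A \<in> measurable ?PL ?PC"
  have sp: "0 < \<sigma>" by fact
  interpret N: prob_space ?N
    unfolding noise_dist_def using sp by (intro prob_space_PiM prob_space_normal_density)
  interpret J: prob_space ?J
    unfolding joint_dist_def Y_dist_def by (intro prob_space_pair prob_space_measure_pmf N.prob_space_axioms)
  define S where "S y = {e \<in> space ?N. A (perturb n y e) = y}" for y
  define C where "C = (\<Union>y\<in>?L. {y} \<times> S y)"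
  have Sm: "S y \<in> sets ?N" if y: "y \<in> ?L" for y
  proof -
    have "(A \<circ> perturb n y) -` {y} \<inter> space ?N \<in> sets ?N"
      by (rule measurable_sets[OF measurable_comp[OF perturb_meas A] single_sets[OF y]])
    also have "(A \<circ> perturb n y) -` {y} \<inter> space ?N = S y" by (auto simp: S_def)
    finally show ?thesis .
  qed
  have sJ: "sets ?J = sets (Y_dist n \<Otimes>\<^sub>M ?N)" by (simp add: joint_dist_def)
  have spJ: "space ?J = UNIV \<times> space ?N"
    by (simp add: joint_dist_def Y_dist_def space_pair_measure)
  have Tm: "{y} \<times> S y \<in> sets ?J" if "y \<in> ?L" for y
    unfolding joint_dist_def using Sm[OF that] by (intro pair_measureI) (auto simp: Y_dist_def)
  have Cm: "C \<in> sets ?J"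
    unfolding C_def using Tm L_finite by (intro sets.finite_UN) auto
  have inPL: "perturb n y e \<in> space ?PL" if "e \<in> space ?N" for y e
    using measurable_space[OF perturb_meas that] .
  have E: "{ye \<in> space ?J. A (perturb n (fst ye) (snd ye)) \<noteq> fst ye} = space ?J - C"
  proof -
    have "A (perturb n (fst ye) (snd ye)) = fst ye \<longleftrightarrow> ye \<in> C" if "ye \<in> space ?J" for ye
    proof -
      have e: "snd ye \<in> space ?N" using that spJ by auto
      have "A (perturb n (fst ye) (snd ye)) \<in> ?L"
        using measurable_space[OF A inPL[OF e]] space_PC by simp
      then show ?thesis using e by (cases ye) (auto simp: C_def S_def)
    qed
    then show ?thesis by auto
  qed
  have ep: "error_prob n \<sigma> A = 1 - J.prob C"
    unfolding error_prob_def E using J.prob_compl[OF Cm] .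
  have "emeasure ?J C = (\<Sum>y\<in>?L. emeasure ?J ({y} \<times> S y))"
    unfolding C_def using Tm L_finite
    by (intro sum_emeasure[symmetric]) (auto simp: disjoint_family_on_def)
  also have "\<dots> = (\<Sum>y\<in>?L. ennreal (1 / 2 ^ n) * emeasure ?N (S y))"
  proof (rule sum.cong[OF refl])
    fix y assume y: "y \<in> ?L"
    have "emeasure ?J ({y} \<times> S y) = emeasure (Y_dist n) {y} * emeasure ?N (S y)"
      unfolding joint_dist_def using Sm[OF y]
      by (intro N.emeasure_pair_measure_Times) (auto simp: Y_dist_def)
    also have "emeasure (Y_dist n) {y} = ennreal (1 / 2 ^ n)"
      unfolding Y_dist_def using y L_ne L_finite by (simp add: emeasure_pmf_single L_card)
    finally show "emeasure ?J ({y} \<times> S y) = ennreal (1 / 2 ^ n) * emeasure ?N (S y)" .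
  qed
  also have "\<dots> = ennreal (1 / 2 ^ n) * (\<Sum>y\<in>?L. emeasure ?N (S y))"
    by (simp add: sum_distrib_left)
  also have "\<dots> \<le> ennreal (1 / 2 ^ n) * ennreal (1 + 2 / (sqrt (2 * pi) * \<sigma>)) ^ n"
    using success_bound[OF sp A] unfolding S_def by (intro mult_left_mono) auto
  also have "\<dots> = ennreal (((1 + 2 / (sqrt (2 * pi) * \<sigma>)) / 2) ^ n)"
  proof -
    define x where "x = 1 + 2 / (sqrt (2 * pi) * \<sigma>)"
    have x0: "0 \<le> x" using sp by (simp add: x_def)
    have "ennreal (1 / 2 ^ n) * ennreal x ^ n = ennreal (1 / 2 ^ n) * ennreal (x ^ n)"
      using x0 by (simp add: ennreal_power)
    also have "\<dots> = ennreal (1 / 2 ^ n * x ^ n)"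
      using x0 by (intro ennreal_mult[symmetric]) auto
    also have "1 / 2 ^ n * x ^ n = (x / 2) ^ n" by (simp add: power_divide)
    finally show ?thesis unfolding x_def .
  qed
  finally have Cle: "emeasure ?J C \<le> ennreal (((1 + 2 / (sqrt (2 * pi) * \<sigma>)) / 2) ^ n)" .
  have probC: "J.prob C \<le> ((1 + 2 / (sqrt (2 * pi) * \<sigma>)) / 2) ^ n"
    using Cle sp by (simp add: J.emeasure_eq_measure ennreal_le_iff)
  have g1: "0 < 1 - \<gamma>" using assms by simp
  have l2: "0 < ln (2::real)" "ln (2::real) < 1" using ln_2_less_1 by auto
  have "(1 - \<gamma>) * ln 2 \<le> 1"
    using g1 l2 assms(2) by (intro mult_le_one) auto
  then have "8 \<le> 8 / ((1 - \<gamma>) * ln 2)"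
    using g1 l2 by (simp add: le_divide_eq)
  then have s8: "8 \<le> \<sigma>\<^sup>2" using assms(6) by linarith
  have "(2 * 3) * 8 \<le> (2 * pi) * \<sigma>\<^sup>2"
    using s8 pi_gt3 by (intro mult_mono) auto
  then have "16 \<le> (2 * pi) * \<sigma>\<^sup>2" by simp
  then have "sqrt 16 \<le> sqrt ((2 * pi) * \<sigma>\<^sup>2)" by (rule real_sqrt_le_mono)
  then have s4: "4 \<le> sqrt (2 * pi) * \<sigma>"
    using sp by (simp add: real_sqrt_mult)
  then have "2 / (sqrt (2 * pi) * \<sigma>) \<le> 1 / 2"
    by (simp add: divide_le_eq)
  then have base: "(1 + 2 / (sqrt (2 * pi) * \<sigma>)) / 2 \<le> 3 / 4" by simp
  have "((1 + 2 / (sqrt (2 * pi) * \<sigma>)) / 2) ^ n \<le> (3/4) ^ n"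
    using base sp by (intro power_mono) auto
  also have "(3/4::real) ^ n \<le> 2 / real n"
    using pow34[of n] assms(1) by (simp add: le_divide_eq mult.commute)
  also have "2 / real n \<le> 1 - \<gamma>" using assms(4) by simp
  finally have "J.prob C \<le> 1 - \<gamma>" using probC by simp
  then show "\<gamma> \<le> error_prob n \<sigma> A" using ep by simp
qed


end
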